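(* Let $\mathbb{G}$ be a streaming graph, $W$ a time window and $Q$ a query graph. An incoming edge $\sigma$ arriving at time $t_i$ is not discardable if and only if, in the current snapshot $\mathbb{G}_i$, there exists at least one query edge $\epsilon\in E(Q)$ such that (1) the prerequisite subquery $Preq(\epsilon)$ has at least one time-constrained match $g$ (a subgraph of $\mathbb{G}_i$) containing $\sigma$, and (2) $\sigma$ is matched to $\epsilon$ in the match relation between $g$ and $Preq(\epsilon)$. Otherwise $\sigma$ is discardable.
   Context: A streaming graph $\mathbb{G}$ is a constantly growing sequence of directed edges $\sigma_1,\sigma_2,\dots$, each with two labelled endpoints and arriving at time $t_i$ (its timestamp), $t_i<t_j$ for $i<j$. With a time window of duration $|W|$, the snapshot at current time $t$ consists of the edges with timestamps in $(t-|W|,t]$ and their endpoints. A query graph is $Q=(V(Q),E(Q),L,\prec)$: vertices, directed edges, vertex labelling $L$, and a strict partial order $\prec$ on $E(Q)$. A subgraph $g$ of the snapshot is a time-constrained match of a query (or subquery with the restricted timing order) if there is a bijection $F$ from the query vertices to $V(g)$ preserving labels, with $\overrightarrow{uv}$ a query edge iff $\overrightarrow{F(u)F(v)}\in E(g)$, and such that $\epsilon\prec\epsilon'$ implies the data edge matched to $\epsilon$ has smaller timestamp than the data edge matched to $\epsilon'$. An incoming edge $\sigma$ is discardable if $\sigma$ cannot be included in any complete time-constrained match of $Q$, no matter what edges arrive in the future. For $\epsilon\in E(Q)$, $Preq(\epsilon)=\{\epsilon' : \epsilon'\prec\epsilon\}\cup\{\epsilon\}$, and the prerequisite subquery $Preq(\epsilon)$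 is the subquery of $Q$ induced by these edges (with timing order $\prec$ restricted to them). *)

theory Defs
  imports Complex_Main
begin

type_synonym 'l dvert = "nat \<times> 'l"
type_synonym 'l dedge = "'l dvert \<times> 'l dvert \<times> real"

definition esrc :: "'l dedge \<Rightarrow> 'l dvert" where "esrc e = fst e"
definition edst :: "'l dedge \<Rightarrow> 'l dvert" where "edst e = fst (snd e)"
definition etime :: "'l dedge \<Rightarrow> real" where "etime e = snd (snd e)"
definition vlabel :: "'l dvert \<Rightarrow> 'l" where "vlabel v = snd v"

definition streaming_graph :: "(nat \<Rightarrow> 'l dedge) \<Rightarrow> bool" where
  "streaming_graph S \<longleftrightarrow> (\<forall>i. etime (S i) < etime (S (Suc i)))"

definition snapshot :: "(nat \<Rightarrow> 'l dedge) \<Rightarrow> real \<Rightarrow> nat \<Rightarrow> 'l dedge set" where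
  "snapshot S W i = {S j | j. etime (S i) - W < etime (S j) \<and> etime (S j) \<le> etime (S i)}"

definition qverts :: "('q \<times> 'q) set \<Rightarrow> 'q set" where
  "qverts Es = fst ` Es \<union> snd ` Es"

definition strict_po_on :: "('q \<times> 'q) set \<Rightarrow> (('q \<times> 'q) \<Rightarrow> ('q \<times> 'q) \<Rightarrow> bool) \<Rightarrow> bool" where
  "strict_po_on E prec \<longleftrightarrow>
     (\<forall>e e'. prec e e' \<longrightarrow> e \<in> E \<and> e' \<in> E) \<and>
     (\<forall>e. \<not> prec e e) \<and>
     (\<forall>e1 e2 e3. prec e1 e2 \<longrightarrow> prec e2 e3 \<longrightarrow> prec e1 e3)"

(* F is the vertex bijection onto V(g), M e is the data edge matched to
   query edge e, and the matched subgraph is g = M ` Es. *)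
definition tc_match :: "('q \<Rightarrow> 'l) \<Rightarrow> ('q \<times> 'q) set \<Rightarrow> (('q \<times> 'q) \<Rightarrow> ('q \<times> 'q) \<Rightarrow> bool)
     \<Rightarrow> 'l dedge set \<Rightarrow> ('q \<Rightarrow> 'l dvert) \<Rightarrow> (('q \<times> 'q) \<Rightarrow> 'l dedge) \<Rightarrow> bool" where
  "tc_match L Es prec G F M \<longleftrightarrow>
     inj_on F (qverts Es) \<and>
     (\<forall>u \<in> qverts Es. vlabel (F u) = L u) \<and>
     (\<forall>e \<in> Es. M e \<in> G \<and> esrc (M e) = F (fst e) \<and> edst (M e) = F (snd e)) \<and>
     (\<forall>e \<in> Es. \<forall>e' \<in> Es. prec e e' \<longrightarrow> etime (M e) < etime (M e'))"

definition Preq :: "(('q \<times> 'q) \<Rightarrow> ('q \<times> 'q) \<Rightarrow> bool) \<Rightarrow> ('q \<times> 'q) set \<Rightarrow> ('q \<times> 'q) \<Rightarrow> ('q \<times> 'q) set" where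
  "Preq prec E e = {e' \<in> E. prec e' e} \<union> {e}"

definition discardable :: "('q \<Rightarrow> 'l) \<Rightarrow> ('q \<times> 'q) set \<Rightarrow> (('q \<times> 'q) \<Rightarrow> ('q \<times> 'q) \<Rightarrow> bool)
     \<Rightarrow> real \<Rightarrow> (nat \<Rightarrow> 'l dedge) \<Rightarrow> nat \<Rightarrow> bool" where
  "discardable L E prec W S i \<longleftrightarrow>
     (\<forall>S'. streaming_graph S' \<and> (\<forall>j \<le> i. S' j = S j) \<longrightarrow>
        (\<forall>k F M. tc_match L E prec (snapshot S' W k) F M \<longrightarrow> S i \<notin> M ` E))"

end

theory Submission
  imports Defs
begin

lemma sg_less:
  assumes "streaming_graph S"
  shows "etime (S a) < etime (S b) \<longleftrightarrow> a < b"
proof -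
  have "strict_mono (\<lambda>j. etime (S j))"
    using assms unfolding streaming_graph_def strict_mono_Suc_iff by simp
  thus ?thesis using strict_mono_less[of "\<lambda>j. etime (S j)" a b] by simp
qed

lemma qverts_mono: "A \<subseteq> B \<Longrightarrow> qverts A \<subseteq> qverts B"
  unfolding qverts_def by auto

lemma Preq_sub: "e \<in> E \<Longrightarrow> Preq prec E e \<subseteq> E"
  unfolding Preq_def by auto

lemma only_if_dir:
  assumes sg: "streaming_graph S" and W: "W > 0"
    and S': "streaming_graph S'" and agree: "\<forall>j \<le> i. S' j = S j"
    and m: "tc_match L E prec (snapshot S' W k) F M" and eE: "e \<in> E" and Me: "M e = S i"
  shows "tc_match L (Preq prec E e) prec (snapshot S W i) F M"
proof -
  have sub: "Preq prec E e \<subseteq> E" using eE by (rule Preq_sub)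
  have qs: "qverts (Preq prec E e) \<subseteq> qverts E" using sub by (rule qverts_mono)
  have Si: "S' i = S i" using agree by simp
  have "M e \<in> snapshot S' W k" using m eE unfolding tc_match_def by blast
  then obtain j0 where j0: "M e = S' j0" "etime (S' j0) \<le> etime (S' k)"
    unfolding snapshot_def by blast
  have "etime (S' i) \<le> etime (S' k)" using j0 Me Si by simp
  have edges: "M e' \<in> snapshot S W i" if e': "e' \<in> Preq prec E e" for e'
  proof (cases "e' = e")
    case True
    then show ?thesis using Me W unfolding snapshot_def by auto
  next
    case False
    then have pe: "prec e' e" "e' \<in> E" using e' unfolding Preq_def by auto
    have lt: "etime (M e') < etime (M e)" using m pe eE unfolding tc_match_def by blast
    have "M e' \<in> snapshot S' W k" using m pe unfolding tc_match_def by blast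
    then obtain j where j: "M e' = S' j" "etime (S' k) - W < etime (S' j)"
      unfolding snapshot_def by blast
    have "etime (S' j) < etime (S' i)" using lt j Me Si by simp
    then have "j < i" using sg_less[OF S'] by blast
    then have "S' j = S j" using agree by simp
    show ?thesis unfolding snapshot_def
      using j \<open>S' j = S j\<close> \<open>etime (S' j) < etime (S' i)\<close> \<open>etime (S' i) \<le> etime (S' k)\<close> Si
      by (intro CollectI exI[of _ j]) auto
  qed
  show ?thesis unfolding tc_match_def
  proof (intro conjI ballI impI)
    show "inj_on F (qverts (Preq prec E e))" using m qs unfolding tc_match_def
      using inj_on_subset by blast
  next
    fix u assume "u \<in> qverts (Preq prec E e)"
    then show "vlabel (F u) = L u" using m qs unfolding tc_match_def by blast
  next
    fix e' assume "e' \<in> Preq prec E e"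
    then show "M e' \<in> snapshot S W i" by (rule edges)
  next
    fix e' assume "e' \<in> Preq prec E e"
    then show "esrc (M e') = F (fst e')" using m sub unfolding tc_match_def by blast
  next
    fix e' assume "e' \<in> Preq prec E e"
    then show "edst (M e') = F (snd e')" using m sub unfolding tc_match_def by blast
  next
    fix e1 e2 assume "e1 \<in> Preq prec E e" "e2 \<in> Preq prec E e" "prec e1 e2"
    then show "etime (M e1) < etime (M e2)" using m sub unfolding tc_match_def by blast
  qed
qed

lemma idx_inj:
  fixes p q N a b :: nat
  assumes "p < N" "q < N" "p + N * a = q + N * b"
  shows "p = q"
proof -
  have "(p + N * a) mod N = p" using assms(1) by simp
  moreover have "(q + N * b) mod N = q" using assms(2) by simp
  ultimately show ?thesis using assms(3) by simp
qed

lemma idx_less: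
  fixes p q N a b :: nat
  assumes "p < N" "a < b"
  shows "p + N * a < q + N * b"
proof -
  have "N * (Suc a) \<le> N * b" using assms(2) by (intro mult_le_mono2) simp
  thus ?thesis using assms(1) by simp
qed

lemma if_dir:
  assumes sg: "streaming_graph S" and W: "W > 0" and fin: "finite E" and po: "strict_po_on E prec"
    and eE: "\<epsilon> \<in> E"
    and m: "tc_match L (Preq prec E \<epsilon>) prec (snapshot S W i) F M" and Me: "M \<epsilon> = S i"
  shows "\<not> discardable L E prec W S i"
proof -
  define P where "P = Preq prec E \<epsilon>"
  have m: "tc_match L P prec (snapshot S W i) F M" using m P_def by simp
  have PE: "P \<subseteq> E" unfolding P_def using eE by (rule Preq_sub)
  have eP: "\<epsilon> \<in> P" unfolding P_def Preq_def by simp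
  have finP: "finite P" using PE fin finite_subset by blast
  have poE: "a \<in> E \<and> b \<in> E" if "prec a b" for a b
    using po that unfolding strict_po_on_def by blast
  have poI: "\<not> prec a a" for a using po unfolding strict_po_on_def by blast
  have poT: "prec a c" if "prec a b" "prec b c" for a b c
    using po that unfolding strict_po_on_def by blast
  have up: "a \<in> P" if "a \<in> E" "b \<in> P" "prec a b" for a b
  proof -
    have "b = \<epsilon> \<or> prec b \<epsilon>" using that(2) unfolding P_def Preq_def by auto
    then have "prec a \<epsilon>" using that(3) po unfolding strict_po_on_def by blast
    then show ?thesis using that(1) unfolding P_def Preq_def by simp
  qed
  define ti where "ti = etime (S i)"
  define N where "N = card E"
  obtain pos where pos: "bij_betw pos E {0..<N}" using ex_bij_betw_finite_nat[OF fin] N_def by blast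
  have posN: "pos e < N" if "e \<in> E" for e using pos that unfolding bij_betw_def by auto
  have posinj: "inj_on pos E" using pos unfolding bij_betw_def by simp
  define r where "r e = card {e' \<in> E. prec e' e}" for e
  have rN: "r e \<le> N" for e unfolding r_def N_def by (rule card_mono[OF fin]) auto
  have rlt: "r a < r b" if "prec a b" for a b
  proof -
    have "{e' \<in> E. prec e' a} \<subset> {e' \<in> E. prec e' b}"
    proof
      show "{e' \<in> E. prec e' a} \<subseteq> {e' \<in> E. prec e' b}"
        using that poT by blast
      have "a \<in> E" using that poE by blast
      then have "a \<in> {e' \<in> E. prec e' b}" "a \<notin> {e' \<in> E. prec e' a}"
        using that poI by auto
      then show "{e' \<in> E. prec e' a} \<noteq> {e' \<in> E. prec e' b}" by blast
    qed
    then show ?thesis unfolding r_def by (rule psubset_card_mono[rotated]) (use fin in auto)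
  qed
  define idx where "idx e = Suc i + (pos e + N * r e)" for e
  define K where "K = Suc (N + N * N)"
  define k where "k = i + K"
  have idx_gt: "i < idx e" for e unfolding idx_def by simp
  have idx_le: "idx e \<le> k" if "e \<in> E" for e
  proof -
    have h: "N * r e \<le> N * N" using rN by (intro mult_le_mono2) 
    have "pos e + N * r e \<le> N + N * N" using add_le_mono[OF less_imp_le[OF posN[OF that]] h] .
    then show ?thesis unfolding idx_def k_def K_def by simp
  qed
  have idxinj: "a = b" if "a \<in> E" "b \<in> E" "idx a = idx b" for a b
  proof -
    have "pos a = pos b" using idx_inj[OF posN[OF that(1)] posN[OF that(2)]] that(3)
      unfolding idx_def by simp
    then show ?thesis using posinj that(1,2) unfolding inj_on_def by blast
  qed
  have idxlt: "idx a < idx b" if "a \<in> E" "prec a b" for a b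
    using idx_less[OF posN[OF that(1)] rlt[OF that(2)]] unfolding idx_def by simp
  have snapP: "M e \<in> snapshot S W i" if "e \<in> P" for e using m that unfolding tc_match_def by blast
  have snapP_t: "ti - W < etime (M e) \<and> etime (M e) \<le> ti" if "e \<in> P" for e
    using snapP[OF that] unfolding snapshot_def ti_def by auto
  define m0 where "m0 = Min ((\<lambda>e. etime (M e)) ` P)"
  have m0le: "m0 \<le> etime (M e)" if "e \<in> P" for e
    unfolding m0_def using finP that by simp
  have m0gt: "ti - W < m0"
    unfolding m0_def using finP eP snapP_t by (subst Min_gr_iff) auto
  have m0ti: "m0 \<le> ti" using m0le[OF eP] snapP_t[OF eP] by simp
  define gap where "gap = m0 - (ti - W)"
  have gap0: "gap > 0" using m0gt gap_def by simp
  define \<delta> where "\<delta> = gap / (real K + 1)"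
  have d0: "\<delta> > 0" using gap0 \<delta>_def by simp
  have Kd: "real K * \<delta> < gap"
  proof -
    have "real K * \<delta> = gap * (real K / (real K + 1))" unfolding \<delta>_def by simp
    also have "\<dots> < gap * 1" using gap0 by (intro mult_strict_left_mono) auto
    finally show ?thesis by simp
  qed
  define T where "T j = ti + real (j - i) * \<delta>" for j
  have Tmono: "T a < T b" if "i \<le> a" "a < b" for a b
    unfolding T_def using that d0 by (simp add: mult_strict_right_mono of_nat_diff)
  have Tmono': "T a \<le> T b" if "i \<le> a" "a \<le> b" for a b
    using Tmono[of a b] that by (cases "a = b") auto
  have Tk: "T k = ti + real K * \<delta>" unfolding T_def k_def by simp
  have Tgt: "ti < T j" if "i < j" for j
    unfolding T_def using that d0 by simp
  have finQ: "finite (qverts E)" unfolding qverts_def using fin by simp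
  obtain code :: "_ \<Rightarrow> nat" where code: "inj_on code (qverts E)"
  proof -
    obtain h where "bij_betw h (qverts E) {0..<card (qverts E)}"
      using ex_bij_betw_finite_nat[OF finQ] by blast
    then show ?thesis using that unfolding bij_betw_def by blast
  qed
  have finQP: "finite (qverts P)" unfolding qverts_def using finP by simp
  define base where "base = Suc (Max (insert 0 ((\<lambda>u. fst (F u)) ` qverts P)))"
  have baseF: "fst (F u) < base" if "u \<in> qverts P" for u
    unfolding base_def using finQP that by (simp add: le_imp_less_Suc)
  define F' where "F' u = (if u \<in> qverts P then F u else (base + code u, L u))" for u
  define ne where "ne e = (F' (fst e), F' (snd e), T (idx e))" for e
  define S' where "S' j = (if j \<le> i then S j else
       if (\<exists>e \<in> E - P. idx e = j) then ne (SOME e. e \<in> E - P \<and> idx e = j)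
       else (fst (S i), fst (snd (S i)), T j))" for j
  define M' where "M' e = (if e \<in> P then M e else ne e)" for e
  have S'le: "S' j = S j" if "j \<le> i" for j using that S'_def by simp
  have S'gt: "etime (S' j) = T j" if "i < j" for j
  proof (cases "\<exists>e \<in> E - P. idx e = j")
    case True
    then have "(SOME e. e \<in> E - P \<and> idx e = j) \<in> E - P \<and> idx (SOME e. e \<in> E - P \<and> idx e = j) = j"
      by (metis (mono_tags, lifting) someI_ex)
    then show ?thesis using that True unfolding S'_def ne_def etime_def by auto
  qed (use that in \<open>simp add: S'_def etime_def\<close>)
  have S'ne: "S' (idx e) = ne e" if "e \<in> E - P" for e
  proof -
    have ex: "\<exists>e' \<in> E - P. idx e' = idx e" using that by blast
    define c where "c = (SOME e'. e' \<in> E - P \<and> idx e' = idx e)"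
    have "c \<in> E - P \<and> idx c = idx e" unfolding c_def using ex by (metis (mono_tags, lifting) someI_ex)
    then have "c = e" using idxinj that by blast
    then show ?thesis unfolding S'_def using ex idx_gt[of e] c_def
      by (simp add: not_le)
  qed
  have sgS': "streaming_graph S'" unfolding streaming_graph_def
  proof
    fix j
    show "etime (S' j) < etime (S' (Suc j))"
    proof (cases "j < i")
      case True
      then show ?thesis using S'le sg unfolding streaming_graph_def by simp
    next
      case False
      then show ?thesis
      proof (cases "j = i")
        case True
        then show ?thesis using S'le[of i] S'gt[of "Suc i"] Tgt[of "Suc i"] ti_def by simp
      next
        case False
        then show ?thesis using \<open>\<not> j < i\<close> S'gt Tmono[of j "Suc j"] by simp
      qed
    qed
  qed
  have tk: "etime (S' k) = T k" using S'gt[of k] unfolding k_def K_def by simp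
  have M'snap: "M' e \<in> snapshot S' W k" if "e \<in> E" for e
  proof (cases "e \<in> P")
    case True
    then obtain j where j: "M e = S j" "etime (S i) - W < etime (S j)" "etime (S j) \<le> etime (S i)"
      using snapP unfolding snapshot_def by blast
    have ji: "j \<le> i" using j(3) sg_less[OF sg, of i j] by linarith
    have "T k - W < etime (M e)" using Tk Kd m0le[OF True] gap_def by simp
    moreover have "etime (M e) \<le> T k" using j(1,3) Tgt[of k] ti_def unfolding k_def K_def by simp
    ultimately show ?thesis unfolding snapshot_def M'_def using True j(1) S'le[OF ji] tk
      by (intro CollectI exI[of _ j]) auto
  next
    case False
    have "T k - W < T (idx e)" using Tk Kd gap_def m0ti Tgt[OF idx_gt[of e]] by simp
    moreover have "T (idx e) \<le> T k" using Tmono' idx_le[OF that] idx_gt[of e] by simp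
    ultimately show ?thesis unfolding snapshot_def M'_def using False that
        S'ne[of e] S'gt[OF idx_gt[of e]] tk
      by (intro CollectI exI[of _ "idx e"]) auto
  qed
  have PQ: "qverts P \<subseteq> qverts E" using PE by (rule qverts_mono)
  have mat: "tc_match L E prec (snapshot S' W k) F' M'" unfolding tc_match_def
  proof (intro conjI ballI impI)
    show "inj_on F' (qverts E)"
    proof (rule inj_onI)
      fix u v assume uv: "u \<in> qverts E" "v \<in> qverts E" "F' u = F' v"
      show "u = v"
      proof (cases "u \<in> qverts P"; cases "v \<in> qverts P")
        assume "u \<in> qverts P" "v \<in> qverts P"
        then show ?thesis using uv m unfolding F'_def tc_match_def inj_on_def by auto
      next
        assume a: "u \<in> qverts P" "v \<notin> qverts P"
        then show ?thesis using uv baseF[of u] unfolding F'_def by (metis fst_conv not_add_less1)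
      next
        assume a: "u \<notin> qverts P" "v \<in> qverts P"
        then show ?thesis using uv baseF[of v] unfolding F'_def by (metis fst_conv not_add_less1)
      next
        assume "u \<notin> qverts P" "v \<notin> qverts P"
        then show ?thesis using uv code unfolding F'_def inj_on_def by auto
      qed
    qed
  next
    fix u assume "u \<in> qverts E"
    then show "vlabel (F' u) = L u" using m unfolding F'_def tc_match_def vlabel_def by auto
  next
    fix e assume "e \<in> E"
    then show "M' e \<in> snapshot S' W k" by (rule M'snap)
  next
    fix e assume "e \<in> E"
    have "fst e \<in> qverts P" if "e \<in> P" using that unfolding qverts_def by auto
    then show "esrc (M' e) = F' (fst e)" using m unfolding M'_def ne_def F'_def tc_match_def esrc_def
      by auto
  next
    fix e assume "e \<in> E"
    have "snd e \<in> qverts P" if "e \<in> P" using that unfolding qverts_def by auto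
    then show "edst (M' e) = F' (snd e)" using m unfolding M'_def ne_def F'_def tc_match_def edst_def
      by auto
  next
    fix a b assume ab: "a \<in> E" "b \<in> E" "prec a b"
    show "etime (M' a) < etime (M' b)"
    proof (cases "a \<in> P"; cases "b \<in> P")
      assume "a \<in> P" "b \<in> P"
      then show ?thesis using m ab unfolding tc_match_def M'_def by auto
    next
      assume "a \<in> P" "b \<notin> P"
      then show ?thesis using snapP_t[of a] Tgt[OF idx_gt[of b]]
        unfolding M'_def ne_def etime_def by auto
    next
      assume "a \<notin> P" "b \<in> P"
      then show ?thesis using up ab by blast
    next
      assume "a \<notin> P" "b \<notin> P"
      then show ?thesis using Tmono[OF less_imp_le[OF idx_gt[of a]] idxlt[OF ab(1,3)]]
        unfolding M'_def ne_def etime_def by auto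
    qed
  qed
  have "M' \<epsilon> = S i" using eP Me M'_def by simp
  then have "S i \<in> M' ` E" using eE by (metis image_eqI)
  moreover have "\<forall>j \<le> i. S' j = S j" using S'le by simp
  ultimately show ?thesis unfolding discardable_def using sgS' mat by blast
qed

theorem lemma1:
  fixes L :: "'q \<Rightarrow> 'l" and E :: "('q \<times> 'q) set"
    and prec :: "('q \<times> 'q) \<Rightarrow> ('q \<times> 'q) \<Rightarrow> bool"
    and W :: real and S :: "nat \<Rightarrow> 'l dedge" and i :: nat
  assumes "streaming_graph S" and "W > 0" and "finite E" and "strict_po_on E prec"
  shows "\<not> discardable L E prec W S i \<longleftrightarrow>
    (\<exists>\<epsilon> \<in> E. \<exists>F M. tc_match L (Preq prec E \<epsilon>) prec (snapshot S W i) F M \<and> M \<epsilon> = S i)"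
proof
  assume "\<not> discardable L E prec W S i"
  then obtain S' k F M where S': "streaming_graph S'" "\<forall>j \<le> i. S' j = S j"
    "tc_match L E prec (snapshot S' W k) F M" "S i \<in> M ` E"
    unfolding discardable_def by blast
  then obtain e where "e \<in> E" "M e = S i" by auto
  then show "\<exists>\<epsilon> \<in> E. \<exists>F M. tc_match L (Preq prec E \<epsilon>) prec (snapshot S W i) F M \<and> M \<epsilon> = S i"
    using only_if_dir[OF assms(1,2) S'(1,2,3)] by blast
next
  assume "\<exists>\<epsilon> \<in> E. \<exists>F M. tc_match L (Preq prec E \<epsilon>) prec (snapshot S W i) F M \<and> M \<epsilon> = S i"
  then show "\<not> discardable L E prec W S i" using if_dir[OF assms] by blast
qed

end
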